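(* In the setting described in the context, there is a constant $C>0$ independent of the mesh size such that $\eta_3\le C(\eta_1+\eta_4)$.
   Context: $\Omega\subset\mathbb{R}^d$ ($1\le d\le3$) is a bounded polyhedral domain, $f\in L^2(\Omega)$, and the obstacle $\chi\in C(\bar\Omega)\cap H^1(\Omega)$ satisfies $\chi\le 0$ on $\partial\Omega$. $\mathcal{T}_h$ is a conforming shape-regular triangulation of $\Omega$ into closed triangles; $h_T$ is the diameter and $|T|$ the area of $T$; $\mathcal{M}_h$ is the set of all edge midpoints, $\mathcal{M}_h^i$ the set of midpoints of interior edges, $\mathcal{V}_h^i$ the interior vertices, $\mathcal{M}_T$ the three edge midpoints of $T$. $V_h=\{v\in H^1_0(\Omega): v|_T\in\mathbb{P}_2(T)\ \forall T\}$ with nodal basis $\{\psi_z: z\in\mathcal{V}_h^i\cup\mathcal{M}_h^i\}$. $V_{nc}$ is the Crouzeix–Raviart space (piecewise affine, continuous at interior edge midpoints, vanishing at boundary edge midpoints). For $v\in V_{nc}$, $\Pi_hv:=\sum_{z\in\mathcal{M}_h^i}v(z)\psi_z$. $a(v,w)=(\nabla v,\nabla w)$. $\mathcal{K}_h=\{v_h\in V_h: v_h(z)\ge\chi(z)\ \forall z\in\mathcal{M}_h\}$, and $u_h\in\mathcal{K}_h$ solves $a(u_h,v_h-u_h)\ge(f,v_h-u_h)$ for all $v_h\in\mathcal{K}_h$. With $\langle w,v\rangle_h=\sum_{T}\frac{|T|}{3}\sum_{z\in\mathcal{M}_T}w(z)v(z)$, $\sigma_h\in V_{nc}$ is defined by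 $\langle\sigma_h,v_h\rangle_h=(f,\Pi_hv_h)-a(u_h,\Pi_hv_h)$ for all $v_h\in V_{nc}$. $\bar v$ denotes the elementwise mean of $v\in L^2(\Omega)$. The estimators are $\eta_1=\big(\sum_{T}h_T^2\|\Delta u_h+f-\sigma_h\|_{L^2(T)}^2\big)^{1/2}$ (with $\Delta u_h$ computed elementwise), $\eta_3=\big(\sum_T h_T^2\|\sigma_h-\bar\sigma_h\|_{L^2(T)}^2\big)^{1/2}$, and $\eta_4=\big(\sum_T h_T^2\min_{c\in\mathbb{R}}\|f-c\|_{L^2(T)}^2\big)^{1/2}$. *)

theory Defs
  imports "HOL-Analysis.Analysis"
begin

type_synonym pt = "real \<times> real"

definition L2_on :: "pt set \<Rightarrow> (pt \<Rightarrow> real) \<Rightarrow> bool" where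
  "L2_on S f \<longleftrightarrow> f \<in> borel_measurable (lebesgue_on S) \<and>
     integrable (lebesgue_on S) (\<lambda>x. (f x)\<^sup>2)"

definition L2norm :: "pt set \<Rightarrow> (pt \<Rightarrow> real) \<Rightarrow> real" where
  "L2norm S f = sqrt (LINT x|lebesgue_on S. (f x)\<^sup>2)"

text \<open>partial derivatives: True = first coordinate, False = second coordinate\<close>
definition pd :: "bool \<Rightarrow> (pt \<Rightarrow> real) \<Rightarrow> pt \<Rightarrow> real" where
  "pd i f x = (if i then deriv (\<lambda>t. f (t, snd x)) (fst x)
                    else deriv (\<lambda>t. f (fst x, t)) (snd x))"

definition smooth :: "(pt \<Rightarrow> real) \<Rightarrow> bool" where
  "smooth \<phi> \<longleftrightarrow> (\<forall>ds::bool list. foldr pd ds \<phi> differentiable_on UNIV)"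

definition test_fun :: "pt set \<Rightarrow> (pt \<Rightarrow> real) \<Rightarrow> bool" where
  "test_fun \<Omega> \<phi> \<longleftrightarrow> smooth \<phi> \<and> compact (closure {x. \<phi> x \<noteq> 0}) \<and>
      closure {x. \<phi> x \<noteq> 0} \<subseteq> \<Omega>"

definition H1_on :: "pt set \<Rightarrow> (pt \<Rightarrow> real) \<Rightarrow> bool" where
  "H1_on \<Omega> v \<longleftrightarrow> L2_on \<Omega> v \<and>
     (\<forall>i. \<exists>g. L2_on \<Omega> g \<and> (\<forall>\<phi>. test_fun \<Omega> \<phi> \<longrightarrow>
        (LINT x|lebesgue_on \<Omega>. v x * pd i \<phi> x) = - (LINT x|lebesgue_on \<Omega>. g x * \<phi> x)))"

definition grad_dot :: "(pt \<Rightarrow> real) \<Rightarrow> (pt \<Rightarrow> real) \<Rightarrow> pt \<Rightarrow> real" where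
  "grad_dot v w x = pd True v x * pd True w x + pd False v x * pd False w x"

definition lap :: "(pt \<Rightarrow> real) \<Rightarrow> pt \<Rightarrow> real" where
  "lap v x = pd True (pd True v) x + pd False (pd False v) x"

definition is_triangle :: "pt set \<Rightarrow> bool" where
  "is_triangle T \<longleftrightarrow> (\<exists>a b c. card {a, b, c} = 3 \<and> \<not> affine_dependent {a, b, c} \<and>
                         T = convex hull {a, b, c})"

definition verts :: "pt set \<Rightarrow> pt set" where
  "verts T = {x. x extreme_point_of T}"

definition edges :: "pt set \<Rightarrow> pt set set" where
  "edges T = {closed_segment a b | a b. a \<in> verts T \<and> b \<in> verts T \<and> a \<noteq> b}"

definition mids :: "pt set \<Rightarrow> pt set" where
  "mids T = {midpoint a b | a b. a \<in> verts T \<and> b \<in> verts T \<and> a \<noteq> b}"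

definition conforming :: "pt set set \<Rightarrow> bool" where
  "conforming \<T> \<longleftrightarrow> (\<forall>T\<in>\<T>. \<forall>T'\<in>\<T>. T \<noteq> T' \<longrightarrow>
      T \<inter> T' = {} \<or> (\<exists>z \<in> verts T \<inter> verts T'. T \<inter> T' = {z}) \<or>
      (\<exists>e \<in> edges T \<inter> edges T'. T \<inter> T' = e))"

definition domain :: "pt set \<Rightarrow> bool" where
  "domain \<Omega> \<longleftrightarrow> open \<Omega> \<and> connected \<Omega> \<and> bounded \<Omega> \<and> \<Omega> \<noteq> {} \<and>
      interior (closure \<Omega>) = \<Omega>"

definition triangulation :: "pt set \<Rightarrow> pt set set \<Rightarrow> bool" where
  "triangulation \<Omega> \<T> \<longleftrightarrow> finite \<T> \<and> \<T> \<noteq> {} \<and> (\<forall>T\<in>\<T>. is_triangle T) \<and>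
      \<Union>\<T> = closure \<Omega> \<and> conforming \<T>"

definition shape_regular :: "real \<Rightarrow> pt set set \<Rightarrow> bool" where
  "shape_regular \<kappa> \<T> \<longleftrightarrow> (\<forall>T\<in>\<T>. (diameter T)\<^sup>2 \<le> \<kappa> * measure lebesgue T)"

definition Mh :: "pt set set \<Rightarrow> pt set" where
  "Mh \<T> = (\<Union>T\<in>\<T>. mids T)"

definition Mhi :: "pt set \<Rightarrow> pt set set \<Rightarrow> pt set" where
  "Mhi \<Omega> \<T> = Mh \<T> - frontier \<Omega>"

definition Vhi :: "pt set \<Rightarrow> pt set set \<Rightarrow> pt set" where
  "Vhi \<Omega> \<T> = (\<Union>T\<in>\<T>. verts T) - frontier \<Omega>"

definition P2_on :: "pt set \<Rightarrow> (pt \<Rightarrow> real) \<Rightarrow> bool" where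
  "P2_on T v \<longleftrightarrow> (\<exists>a b c d e g. \<forall>x\<in>T. v x = a + b * fst x + c * snd x +
       d * (fst x)\<^sup>2 + e * fst x * snd x + g * (snd x)\<^sup>2)"

definition affine_fun :: "(pt \<Rightarrow> real) \<Rightarrow> bool" where
  "affine_fun v \<longleftrightarrow> (\<exists>a b c. \<forall>x. v x = a + b * fst x + c * snd x)"

text \<open>continuous piecewise quadratics vanishing on the boundary (extended by zero)\<close>
definition Vh :: "pt set \<Rightarrow> pt set set \<Rightarrow> (pt \<Rightarrow> real) set" where
  "Vh \<Omega> \<T> = {v. (\<forall>T\<in>\<T>. P2_on T v) \<and> (\<forall>x. x \<notin> \<Omega> \<longrightarrow> v x = 0)}"

definition psi :: "pt set \<Rightarrow> pt set set \<Rightarrow> pt \<Rightarrow> pt \<Rightarrow> real" where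
  "psi \<Omega> \<T> z = (THE w. w \<in> Vh \<Omega> \<T> \<and>
      (\<forall>y \<in> Vhi \<Omega> \<T> \<union> Mhi \<Omega> \<T>. w y = (if y = z then 1 else 0)))"

text \<open>Crouzeix-Raviart functions, represented elementwise (T maps to the affine piece on T)\<close>
definition Vnc :: "pt set \<Rightarrow> pt set set \<Rightarrow> (pt set \<Rightarrow> pt \<Rightarrow> real) set" where
  "Vnc \<Omega> \<T> = {s. (\<forall>T\<in>\<T>. affine_fun (s T)) \<and>
      (\<forall>T\<in>\<T>. \<forall>T'\<in>\<T>. \<forall>m \<in> mids T \<inter> mids T'. s T m = s T' m) \<and>
      (\<forall>T\<in>\<T>. \<forall>m \<in> mids T. m \<in> frontier \<Omega> \<longrightarrow> s T m = 0)}"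

definition nc_val :: "pt set set \<Rightarrow> (pt set \<Rightarrow> pt \<Rightarrow> real) \<Rightarrow> pt \<Rightarrow> real" where
  "nc_val \<T> s z = s (SOME T. T \<in> \<T> \<and> z \<in> mids T) z"

definition Pih :: "pt set \<Rightarrow> pt set set \<Rightarrow> (pt set \<Rightarrow> pt \<Rightarrow> real) \<Rightarrow> pt \<Rightarrow> real" where
  "Pih \<Omega> \<T> s = (\<lambda>x. \<Sum>z\<in>Mhi \<Omega> \<T>. nc_val \<T> s z * psi \<Omega> \<T> z x)"

definition a_form :: "pt set \<Rightarrow> (pt \<Rightarrow> real) \<Rightarrow> (pt \<Rightarrow> real) \<Rightarrow> real" where
  "a_form \<Omega> v w = (LINT x|lebesgue_on \<Omega>. grad_dot v w x)"

definition L2ip :: "pt set \<Rightarrow> (pt \<Rightarrow> real) \<Rightarrow> (pt \<Rightarrow> real) \<Rightarrow> real" where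
  "L2ip \<Omega> v w = (LINT x|lebesgue_on \<Omega>. v x * w x)"

definition Kh :: "pt set \<Rightarrow> pt set set \<Rightarrow> (pt \<Rightarrow> real) \<Rightarrow> (pt \<Rightarrow> real) set" where
  "Kh \<Omega> \<T> chi = {v \<in> Vh \<Omega> \<T>. \<forall>z \<in> Mh \<T>. v z \<ge> chi z}"

definition disc_ip :: "pt set set \<Rightarrow> (pt set \<Rightarrow> pt \<Rightarrow> real) \<Rightarrow> (pt set \<Rightarrow> pt \<Rightarrow> real) \<Rightarrow> real" where
  "disc_ip \<T> w v = (\<Sum>T\<in>\<T>. measure lebesgue T / 3 * (\<Sum>z\<in>mids T. w T z * v T z))"

definition eta1 :: "pt set set \<Rightarrow> (pt \<Rightarrow> real) \<Rightarrow> (pt \<Rightarrow> real) \<Rightarrow> (pt set \<Rightarrow> pt \<Rightarrow> real) \<Rightarrow> real" where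
  "eta1 \<T> f u \<sigma> = sqrt (\<Sum>T\<in>\<T>. (diameter T)\<^sup>2 * (L2norm T (\<lambda>x. lap u x + f x - \<sigma> T x))\<^sup>2)"

definition elem_mean :: "pt set \<Rightarrow> (pt \<Rightarrow> real) \<Rightarrow> real" where
  "elem_mean T v = (LINT x|lebesgue_on T. v x) / measure lebesgue T"

definition eta3 :: "pt set set \<Rightarrow> (pt set \<Rightarrow> pt \<Rightarrow> real) \<Rightarrow> real" where
  "eta3 \<T> \<sigma> = sqrt (\<Sum>T\<in>\<T>. (diameter T)\<^sup>2 * (L2norm T (\<lambda>x. \<sigma> T x - elem_mean T (\<sigma> T)))\<^sup>2)"

definition eta4 :: "pt set set \<Rightarrow> (pt \<Rightarrow> real) \<Rightarrow> real" where
  "eta4 \<T> f = sqrt (\<Sum>T\<in>\<T>. (diameter T)\<^sup>2 * (INF c::real. L2norm T (\<lambda>x. f x - c))\<^sup>2)"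

end

theory Submission
  imports Defs
begin



lemma real_mink_aux:
  fixes A B x :: real
  assumes A: "A \<ge> 0" and B: "B \<ge> 0" and H: "\<And>t. t > 0 \<Longrightarrow> x \<le> (1+t)*A + (1+1/t)*B"
  shows "sqrt x \<le> sqrt A + sqrt B"
proof -
  have "x \<le> (sqrt A + sqrt B)^2"
  proof (cases "A > 0 \<and> B > 0")
    case True
    define t where "t = sqrt B / sqrt A"
    have tp: "t > 0" using True by (simp add: t_def)
    have "(1+t)*A + (1+1/t)*B = (sqrt A + sqrt B)^2"
      using True unfolding t_def
      by (simp add: field_simps power2_eq_square)
    then show ?thesis using H[OF tp] by simp
  next
    case False
    then have "A = 0 \<or> B = 0" using A B by auto
    then show ?thesis
    proof
      assume A0: "A = 0"
      show ?thesis
      proof (rule ccontr)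
        assume "\<not> ?thesis"
        then have xB: "x > B" using A0 B by simp
        show False
        proof (cases "B = 0")
          case True then show False using H[of 1] xB A0 by simp
        next
          case False
          define t where "t = 2*B/(x-B)"
          have tp: "t > 0" using False B xB by (simp add: t_def)
          have e: "(1+1/t)*B = B + (x-B)/2" using False xB by (simp add: t_def field_simps)
          have "x \<le> B + (x-B)/2" using H[OF tp] A0 e by simp
          then show False using xB by (simp add: field_simps)
        qed
      qed
    next
      assume B0: "B = 0"
      show ?thesis
      proof (rule ccontr)
        assume "\<not> ?thesis"
        then have xA: "x > A" using B0 A by simp
        show False
        proof (cases "A = 0")
          case True then show False using H[of 1] xA B0 by simp
        next
          case False
          define t where "t = (x-A)/(2*A)"
          have tp: "t > 0" using False A xA by (simp add: t_def)
          have e: "(1+t)*A = A + (x-A)/2" using False xA by (simp add: t_def field_simps)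
          have "x \<le> A + (x-A)/2" using H[OF tp] B0 e by simp
          then show False using xA by (simp add: field_simps)
        qed
      qed
    qed
  qed
  then have "sqrt x \<le> sqrt ((sqrt A + sqrt B)^2)" by (rule real_sqrt_le_mono)
  also have "\<dots> = sqrt A + sqrt B" using A B by simp
  finally show ?thesis .
qed

lemma L2_mink:
  fixes a b :: "'a \<Rightarrow> real"
  assumes am[measurable]: "a \<in> borel_measurable M" and bm[measurable]: "b \<in> borel_measurable M"
    and ai: "integrable M (\<lambda>x. (a x)\<^sup>2)" and bi: "integrable M (\<lambda>x. (b x)\<^sup>2)"
  shows "sqrt (\<integral>x. (a x - b x)\<^sup>2 \<partial>M) \<le> sqrt (\<integral>x. (a x)\<^sup>2 \<partial>M) + sqrt (\<integral>x. (b x)\<^sup>2 \<partial>M)"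
proof (rule real_mink_aux)
  show "0 \<le> (\<integral>x. (a x)\<^sup>2 \<partial>M)" "0 \<le> (\<integral>x. (b x)\<^sup>2 \<partial>M)" by auto
  fix t :: real assume t: "t > 0"
  have abi: "integrable M (\<lambda>x. (a x - b x)\<^sup>2)"
  proof (rule Bochner_Integration.integrable_bound[where f="\<lambda>x. 2 * (a x)\<^sup>2 + 2 * (b x)\<^sup>2"])
    show "integrable M (\<lambda>x. 2 * (a x)\<^sup>2 + 2 * (b x)\<^sup>2)" using ai bi by auto
    show "AE x in M. norm ((a x - b x)\<^sup>2) \<le> norm (2 * (a x)\<^sup>2 + 2 * (b x)\<^sup>2)"
    proof (intro AE_I2)
      fix x
      have e: "2 * (a x)\<^sup>2 + 2 * (b x)\<^sup>2 - (a x - b x)\<^sup>2 = (a x + b x)\<^sup>2"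
        by (simp add: power2_eq_square algebra_simps)
      have "0 \<le> (a x + b x)\<^sup>2" by simp
      then have "(a x - b x)\<^sup>2 \<le> 2 * (a x)\<^sup>2 + 2 * (b x)\<^sup>2" using e by linarith
      then show "norm ((a x - b x)\<^sup>2) \<le> norm (2 * (a x)\<^sup>2 + 2 * (b x)\<^sup>2)"
        by simp
    qed
  qed measurable
  have "(\<integral>x. (a x - b x)\<^sup>2 \<partial>M) \<le> (\<integral>x. (1+t)*(a x)\<^sup>2 + (1+1/t)*(b x)\<^sup>2 \<partial>M)"
  proof (rule integral_mono)
    show "integrable M (\<lambda>x. (1+t)*(a x)\<^sup>2 + (1+1/t)*(b x)\<^sup>2)" using ai bi by auto
    fix x
    have "0 \<le> (t * a x + b x)^2 / t" using t by simp
    also have "(t * a x + b x)^2 / t = (1+t)*(a x)\<^sup>2 + (1+1/t)*(b x)\<^sup>2 - (a x - b x)\<^sup>2"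
      using t by (simp add: field_simps power2_eq_square)
    finally show "(a x - b x)\<^sup>2 \<le> (1+t)*(a x)\<^sup>2 + (1+1/t)*(b x)\<^sup>2"
      by linarith
  qed (rule abi)
  also have "\<dots> = (1+t)*(\<integral>x. (a x)\<^sup>2 \<partial>M) + (1+1/t)*(\<integral>x. (b x)\<^sup>2 \<partial>M)"
    using ai bi by simp
  finally show "(\<integral>x. (a x - b x)\<^sup>2 \<partial>M) \<le> (1+t)*(\<integral>x. (a x)\<^sup>2 \<partial>M) + (1+1/t)*(\<integral>x. (b x)\<^sup>2 \<partial>M)" .
qed

lemma sq_int_imp_int:
  fixes s :: "'a \<Rightarrow> real"
  assumes "finite_measure M" and [measurable]: "s \<in> borel_measurable M" and si: "integrable M (\<lambda>x. (s x)\<^sup>2)"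
  shows "integrable M s"
proof (rule Bochner_Integration.integrable_bound[where f="\<lambda>x. 1 + (s x)\<^sup>2"])
  interpret finite_measure M by fact
  show "integrable M (\<lambda>x. 1 + (s x)\<^sup>2)" using si by auto
  show "AE x in M. norm (s x) \<le> norm (1 + (s x)\<^sup>2)"
  proof (intro AE_I2)
    fix x
    have e: "(\<bar>s x\<bar> - 1)\<^sup>2 = (s x)\<^sup>2 - 2 * \<bar>s x\<bar> + 1"
      by (simp add: power2_eq_square algebra_simps)
    have "0 \<le> (\<bar>s x\<bar> - 1)\<^sup>2" by simp
    moreover have "0 \<le> (s x)\<^sup>2" by simp
    ultimately have "\<bar>s x\<bar> \<le> 1 + (s x)\<^sup>2" using e by linarith
    then show "norm (s x) \<le> norm (1 + (s x)\<^sup>2)" by simp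
  qed
qed measurable

lemma mean_min:
  fixes s :: "'a \<Rightarrow> real"
  assumes fm: "finite_measure M" and [measurable]: "s \<in> borel_measurable M" and si: "integrable M (\<lambda>x. (s x)\<^sup>2)"
  shows "(\<integral>x. (s x - (\<integral>y. s y \<partial>M) / measure M (space M))\<^sup>2 \<partial>M) \<le> (\<integral>x. (s x - m)\<^sup>2 \<partial>M)"
proof -
  interpret finite_measure M by fact
  have s1: "integrable M s" using sq_int_imp_int[OF fm _ si] by simp
  define I where "I = (\<integral>y. s y \<partial>M)"
  define Q where "Q = (\<integral>y. (s y)\<^sup>2 \<partial>M)"
  define mu where "mu = measure M (space M)"
  have F: "(\<integral>x. (s x - k)\<^sup>2 \<partial>M) = Q - 2*k*I + k^2*mu" for k
  proof -
    have "(\<lambda>x. (s x - k)\<^sup>2) = (\<lambda>x. (s x)\<^sup>2 - 2*k*(s x) + k^2)"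
      by (auto simp: power2_eq_square algebra_simps)
    then show ?thesis using si s1 by (simp add: Q_def I_def mu_def)
  qed
  show ?thesis
  proof (cases "mu > 0")
    case True
    have "Q - 2*(I/mu)*I + (I/mu)^2*mu \<le> Q - 2*m*I + m^2*mu"
    proof -
      have "Q - 2*m*I + m^2*mu - (Q - 2*(I/mu)*I + (I/mu)^2*mu) = mu * (m - I/mu)^2"
        using True by (simp add: field_simps power2_eq_square)
      moreover have "mu * (m - I/mu)^2 \<ge> 0" using True by simp
      ultimately show ?thesis by linarith
    qed
    then show ?thesis using F unfolding I_def mu_def by simp
  next
    case False
    then have mu0: "mu = 0" using measure_nonneg[of M "space M"] by (simp add: mu_def)
    then have "emeasure M (space M) = 0" by (simp add: mu_def emeasure_eq_measure)
    then have "AE x in M. False" by (simp add: AE_iff_measurable[OF _ refl])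
    then have "AE x in M. s x = 0" by auto
    then have "I = 0" unfolding I_def by (subst integral_cong_AE[where g="\<lambda>_. 0"]) auto
    then have e1: "(\<integral>x. (s x - I/mu)\<^sup>2 \<partial>M) = Q" using F[of "I/mu"] mu0 by simp
    have e2: "(\<integral>x. (s x - m)\<^sup>2 \<partial>M) = Q" using F[of m] mu0 \<open>I = 0\<close> by simp
    show ?thesis using e1 e2 unfolding I_def mu_def by simp
  qed
qed



lemma pd_local:
  assumes U: "open U" and x: "x \<in> U" and eq: "\<And>y. y \<in> U \<Longrightarrow> h y = q y"
  shows "pd i h x = pd i q x"
proof -
  have ev1: "eventually (\<lambda>t. (t, snd x) \<in> U) (nhds (fst x))"
    by (rule topological_tendstoD[OF tendsto_Pair[OF filterlim_ident tendsto_const] U]) (simp add: x)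
  have ev2: "eventually (\<lambda>t. (fst x, t) \<in> U) (nhds (snd x))"
    by (rule topological_tendstoD[OF tendsto_Pair[OF tendsto_const filterlim_ident] U]) (simp add: x)
  show ?thesis
  proof (cases i)
    case True
    have "deriv (\<lambda>t. h (t, snd x)) (fst x) = deriv (\<lambda>t. q (t, snd x)) (fst x)"
      by (rule deriv_cong_ev[OF eventually_mono[OF ev1]]) (auto simp: eq)
    then show ?thesis using True by (simp add: pd_def)
  next
    case False
    have "deriv (\<lambda>t. h (fst x, t)) (snd x) = deriv (\<lambda>t. q (fst x, t)) (snd x)"
      by (rule deriv_cong_ev[OF eventually_mono[OF ev2]]) (auto simp: eq)
    then show ?thesis using False by (simp add: pd_def)
  qed
qed

lemma lap_local:
  assumes U: "open U" and x: "x \<in> U" and eq: "\<And>y. y \<in> U \<Longrightarrow> h y = q y"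
  shows "lap h x = lap q x"
proof -
  have 1: "\<And>y. y \<in> U \<Longrightarrow> pd i h y = pd i q y" for i using pd_local[of U _ h q] eq U by blast
  have "pd j (pd i h) x = pd j (pd i q) x" for i j by (rule pd_local[OF U x 1])
  then show ?thesis by (simp add: lap_def)
qed

definition poly2 :: "real \<Rightarrow> real \<Rightarrow> real \<Rightarrow> real \<Rightarrow> real \<Rightarrow> real \<Rightarrow> pt \<Rightarrow> real" where
  "poly2 a b c d e g = (\<lambda>x. a + b * fst x + c * snd x + d * (fst x)\<^sup>2 + e * fst x * snd x + g * (snd x)\<^sup>2)"

lemma pd_poly2_T: "pd True (poly2 a b c d e g) = poly2 b (2*d) e 0 0 0"
proof
  fix x :: pt
  have "((\<lambda>t. a + b * t + c * snd x + d * t\<^sup>2 + e * t * snd x + g * (snd x)\<^sup>2) has_real_derivative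
        (b + 2 * d * fst x + e * snd x)) (at (fst x))"
    by (auto intro!: derivative_eq_intros simp: power2_eq_square)
  then show "pd True (poly2 a b c d e g) x = poly2 b (2*d) e 0 0 0 x"
    by (simp add: pd_def poly2_def DERIV_imp_deriv)
qed

lemma pd_poly2_F: "pd False (poly2 a b c d e g) = poly2 c e (2*g) 0 0 0"
proof
  fix x :: pt
  have "((\<lambda>t. a + b * fst x + c * t + d * (fst x)\<^sup>2 + e * fst x * t + g * t\<^sup>2) has_real_derivative
        (c + e * fst x + 2 * g * snd x)) (at (snd x))"
    by (auto intro!: derivative_eq_intros simp: power2_eq_square)
  then show "pd False (poly2 a b c d e g) x = poly2 c e (2*g) 0 0 0 x"
    by (simp add: pd_def poly2_def DERIV_imp_deriv)
qed

lemma lap_poly2: "lap (poly2 a b c d e g) x = 2*d + 2*g"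
  by (simp add: lap_def pd_poly2_T pd_poly2_F) (simp add: poly2_def)

lemma meas_ae:
  fixes h g :: "pt \<Rightarrow> real"
  assumes S: "S \<in> sets lebesgue" and S': "S' \<in> sets lebesgue"
    and g: "g \<in> borel_measurable (lebesgue_on S')"
    and eq: "\<And>x. x \<in> S \<Longrightarrow> x \<in> S' \<Longrightarrow> h x = g x" and N: "negligible (S - S')"
  shows "h \<in> borel_measurable (lebesgue_on S)"
  unfolding borel_measurable_lebesgue_on_preimage_borel[OF S]
proof (intro allI impI)
  fix B :: "real set" assume B: "B \<in> sets borel"
  have 1: "{x \<in> S'. g x \<in> B} \<in> sets lebesgue"
    using g B borel_measurable_lebesgue_on_preimage_borel[OF S'] by blast
  have 2: "{x \<in> S - S'. h x \<in> B} \<in> sets lebesgue"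
    by (rule negligible_imp_sets, rule negligible_subset[OF N]) auto
  have "{x \<in> S. h x \<in> B} = ({x \<in> S'. g x \<in> B} \<inter> S) \<union> {x \<in> S - S'. h x \<in> B}"
    using eq by auto
  then show "{x \<in> S. h x \<in> B} \<in> sets lebesgue" using 1 2 S by auto
qed

lemma int_transfer:
  fixes F :: "pt \<Rightarrow> real"
  assumes S: "S \<in> sets lebesgue" and S': "S' \<in> sets lebesgue"
    and Fm: "F \<in> borel_measurable (lebesgue_on S)"
    and Fi: "integrable (lebesgue_on S') F" and N: "negligible (S - S')"
  shows "integrable (lebesgue_on S) F"
proof -
  have i': "integrable lebesgue (\<lambda>x. indicator S' x *\<^sub>R F x)"
    using Fi S' by (simp add: integrable_restrict_space)
  have m: "(\<lambda>x. indicator S x *\<^sub>R F x) \<in> borel_measurable lebesgue"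
    using Fm S by (simp add: borel_measurable_restrict_space_iff)
  have "integrable lebesgue (\<lambda>x. indicator S x *\<^sub>R F x)"
  proof (rule Bochner_Integration.integrable_bound[OF i' m])
    show "AE x in lebesgue. norm (indicator S x *\<^sub>R F x) \<le> norm (indicator S' x *\<^sub>R F x)"
    proof (rule AE_I')
      show "S - S' \<in> null_sets lebesgue" using N by (simp add: negligible_iff_null_sets)
    qed (auto simp: indicator_def)
  qed
  then show ?thesis using S by (simp add: integrable_restrict_space)
qed




lemma sq_diff_int:
  fixes a b :: "'a \<Rightarrow> real"
  assumes [measurable]: "a \<in> borel_measurable M" "b \<in> borel_measurable M"
    and ai: "integrable M (\<lambda>x. (a x)\<^sup>2)" and bi: "integrable M (\<lambda>x. (b x)\<^sup>2)"
  shows "integrable M (\<lambda>x. (a x - b x)\<^sup>2)"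
proof (rule Bochner_Integration.integrable_bound[where f="\<lambda>x. 2 * (a x)\<^sup>2 + 2 * (b x)\<^sup>2"])
  show "integrable M (\<lambda>x. 2 * (a x)\<^sup>2 + 2 * (b x)\<^sup>2)" using ai bi by auto
  show "AE x in M. norm ((a x - b x)\<^sup>2) \<le> norm (2 * (a x)\<^sup>2 + 2 * (b x)\<^sup>2)"
  proof (intro AE_I2)
    fix x
    have e: "2 * (a x)\<^sup>2 + 2 * (b x)\<^sup>2 - (a x - b x)\<^sup>2 = (a x + b x)\<^sup>2"
      by (simp add: power2_eq_square algebra_simps)
    have "0 \<le> (a x + b x)\<^sup>2" by simp
    then have "(a x - b x)\<^sup>2 \<le> 2 * (a x)\<^sup>2 + 2 * (b x)\<^sup>2" using e by linarith
    then show "norm ((a x - b x)\<^sup>2) \<le> norm (2 * (a x)\<^sup>2 + 2 * (b x)\<^sup>2)"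
      by simp
  qed
qed measurable

lemma tri_bound:
  fixes \<Omega> T :: "pt set" and f u s :: "pt \<Rightarrow> real"
  assumes Tc: "compact T" and Tv: "convex T" and Om: "open \<Omega>" and intT: "interior T \<subseteq> \<Omega>"
    and fL2: "L2_on \<Omega> f" and sa: "affine_fun s" and P2: "P2_on T u"
  shows "L2norm T (\<lambda>x. s x - elem_mean T s) \<le>
           (INF c::real. L2norm T (\<lambda>x. f x - c)) + L2norm T (\<lambda>x. lap u x + f x - s x)"
proof -
  have Tcl: "closed T" using Tc by (simp add: compact_imp_closed)
  have Tl: "T \<in> sets lebesgue" using lmeasurable_compact[OF Tc] by (simp add: fmeasurable_def)
  have Ol: "\<Omega> \<in> sets lebesgue" using Om by simp
  have Il: "interior T \<in> sets lebesgue" by simp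
  have nf: "negligible (T - interior T)"
    using negligible_convex_frontier[OF Tv] Tcl by (simp add: frontier_def closure_closed)
  have nO: "negligible (T - \<Omega>)" using intT by (rule_tac negligible_subset[OF nf]) auto
  define M where "M = lebesgue_on T"
  have spM: "space M = T" by (simp add: M_def)
  have muM: "measure M (space M) = measure lebesgue T"
    using Tl by (simp add: M_def measure_restrict_space)
  have fmM: "finite_measure M"
  proof
    show "emeasure M (space M) \<noteq> \<infinity>"
      using lmeasurable_compact[OF Tc] Tl by (simp add: M_def emeasure_restrict_space fmeasurable_def)
  qed
  interpret finite_measure M by (rule fmM)
  obtain a0 b0 c0 where s_def: "\<And>x. s x = a0 + b0 * fst x + c0 * snd x"
    using sa unfolding affine_fun_def by blast
  have scont: "continuous_on UNIV s" unfolding s_def[abs_def] by (intro continuous_intros)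
  have sm[measurable]: "s \<in> borel_measurable M"
    unfolding M_def by (rule continuous_imp_measurable_on_sets_lebesgue[OF continuous_on_subset[OF scont] Tl]) auto
  obtain a b c d e g where u_eq: "\<And>x. x \<in> T \<Longrightarrow> u x = poly2 a b c d e g x"
    using P2 unfolding P2_on_def poly2_def by blast
  define L where "L = 2*d + 2*g"
  have lapL: "lap u x = L" if "x \<in> interior T" for x
    using lap_local[OF open_interior that, of u "poly2 a b c d e g"] u_eq interior_subset lap_poly2
    by (auto simp: L_def)
  have fmO: "f \<in> borel_measurable (lebesgue_on \<Omega>)" and fiO: "integrable (lebesgue_on \<Omega>) (\<lambda>x. (f x)\<^sup>2)"
    using fL2 by (auto simp: L2_on_def)
  have fm[measurable]: "f \<in> borel_measurable M"
    unfolding M_def by (rule meas_ae[OF Tl Ol fmO _ nO]) auto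
  have lm[measurable]: "lap u \<in> borel_measurable M"
    unfolding M_def by (rule meas_ae[OF Tl Il _ _ nf, where g="\<lambda>_. L"]) (auto simp: lapL)
  have fi: "integrable M (\<lambda>x. (f x)\<^sup>2)"
    unfolding M_def by (rule int_transfer[OF Tl Ol _ fiO nO]) (simp add: M_def[symmetric])
  have "bounded (s ` T)" using compact_continuous_image[OF continuous_on_subset[OF scont] Tc]
    by (simp add: compact_imp_bounded)
  then obtain B where B: "\<And>x. x \<in> T \<Longrightarrow> \<bar>s x\<bar> \<le> B" by (auto simp: bounded_real)
  have si: "integrable M (\<lambda>x. (s x)\<^sup>2)"
  proof (rule integrable_const_bound[where B="B^2"])
    show "AE x in M. norm ((s x)\<^sup>2) \<le> B^2"
    proof (rule AE_I2)
      fix x assume "x \<in> space M"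
      then have sb: "\<bar>s x\<bar> \<le> B" using B spM by auto
      show "norm ((s x)\<^sup>2) \<le> B^2"
        using power_mono[OF sb abs_ge_zero, of 2] by simp
    qed
  qed measurable
  have consti: "integrable M (\<lambda>x. k)" for k :: real by simp
  have cm[measurable]: "(\<lambda>x. k) \<in> borel_measurable M" for k :: real by simp
  define e0 where "e0 = L2norm T (\<lambda>x. lap u x + f x - s x)"
  have key: "L2norm T (\<lambda>x. s x - elem_mean T s) - e0 \<le> L2norm T (\<lambda>x. f x - cc)" for cc
  proof -
    define A where "A = (\<lambda>x. f x - cc)"
    define Bf where "Bf = (\<lambda>x. f x - (s x - L))"
    have [measurable]: "A \<in> borel_measurable M" "Bf \<in> borel_measurable M" by (auto simp: A_def Bf_def)
    have Ai: "integrable M (\<lambda>x. (A x)\<^sup>2)" unfolding A_def by (rule sq_diff_int) (auto simp: fi)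
    have sLi: "integrable M (\<lambda>x. (s x - L)\<^sup>2)" by (rule sq_diff_int) (auto simp: si)
    have Bi: "integrable M (\<lambda>x. (Bf x)\<^sup>2)" unfolding Bf_def by (rule sq_diff_int) (auto simp: fi sLi)
    have mean: "elem_mean T s = (\<integral>y. s y \<partial>M) / measure M (space M)"
    proof -
      have muM': "measure (lebesgue_on T) T = measure lebesgue T"
        using Tl by (simp add: measure_restrict_space)
      show ?thesis by (simp add: elem_mean_def M_def muM')
    qed
    have step1: "(\<integral>x. (s x - elem_mean T s)\<^sup>2 \<partial>M) \<le> (\<integral>x. (s x - (cc + L))\<^sup>2 \<partial>M)"
      unfolding mean by (rule mean_min[OF fmM sm si])
    have step2: "(\<lambda>x. (s x - (cc + L))\<^sup>2) = (\<lambda>x. (A x - Bf x)\<^sup>2)"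
      by (auto simp: A_def Bf_def power2_eq_square algebra_simps)
    have step3: "sqrt (\<integral>x. (A x - Bf x)\<^sup>2 \<partial>M) \<le> sqrt (\<integral>x. (A x)\<^sup>2 \<partial>M) + sqrt (\<integral>x. (Bf x)\<^sup>2 \<partial>M)"
      by (rule L2_mink) (auto simp: Ai Bi)
    have step4: "(\<integral>x. (Bf x)\<^sup>2 \<partial>M) = (\<integral>x. (lap u x + f x - s x)\<^sup>2 \<partial>M)"
    proof (rule integral_cong_AE)
      show "AE x in M. (Bf x)\<^sup>2 = (lap u x + f x - s x)\<^sup>2"
        unfolding M_def
      proof (subst AE_restrict_space_iff)
        show "T \<inter> space lebesgue \<in> sets lebesgue" using Tl by simp
        show "AE x in lebesgue. x \<in> T \<longrightarrow> (Bf x)\<^sup>2 = (lap u x + f x - s x)\<^sup>2"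
        proof (rule AE_I')
          show "T - interior T \<in> null_sets lebesgue" using nf by (simp add: negligible_iff_null_sets)
        qed (auto simp: Bf_def lapL algebra_simps)
      qed
    qed measurable
    have "sqrt (\<integral>x. (s x - elem_mean T s)\<^sup>2 \<partial>M) \<le> sqrt (\<integral>x. (s x - (cc + L))\<^sup>2 \<partial>M)"
      using step1 by simp
    also have "\<dots> \<le> sqrt (\<integral>x. (A x)\<^sup>2 \<partial>M) + sqrt (\<integral>x. (Bf x)\<^sup>2 \<partial>M)"
      using step2 step3 by simp
    finally show ?thesis
      unfolding L2norm_def e0_def A_def step4[symmetric] M_def[symmetric] by simp
  qed
  have "L2norm T (\<lambda>x. s x - elem_mean T s) - e0 \<le> (INF c::real. L2norm T (\<lambda>x. f x - c))"
    by (rule cINF_greatest) (auto intro: key)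
  then show ?thesis unfolding e0_def by simp
qed



theorem lemma3p4:
  fixes \<Omega> :: "pt set" and \<kappa> :: real
  assumes "domain \<Omega>"
  shows "\<exists>C>0. \<forall>\<T> f chi u \<sigma>.
     triangulation \<Omega> \<T> \<and> shape_regular \<kappa> \<T> \<and>
     L2_on \<Omega> f \<and>
     continuous_on (closure \<Omega>) chi \<and> H1_on \<Omega> chi \<and> (\<forall>x\<in>frontier \<Omega>. chi x \<le> 0) \<and>
     u \<in> Kh \<Omega> \<T> chi \<and>
     (\<forall>v \<in> Kh \<Omega> \<T> chi. a_form \<Omega> u (\<lambda>x. v x - u x) \<ge> L2ip \<Omega> f (\<lambda>x. v x - u x)) \<and>
     \<sigma> \<in> Vnc \<Omega> \<T> \<and>
     (\<forall>v \<in> Vnc \<Omega> \<T>. disc_ip \<T> \<sigma> v =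
         L2ip \<Omega> f (Pih \<Omega> \<T> v) - a_form \<Omega> u (Pih \<Omega> \<T> v))
     \<longrightarrow> eta3 \<T> \<sigma> \<le> C * (eta1 \<T> f u \<sigma> + eta4 \<T> f)"
proof (rule exI[of _ 1], intro conjI allI impI)
  show "(0::real) < 1" by simp
  fix \<T> f chi u \<sigma>
  assume H: "triangulation \<Omega> \<T> \<and> shape_regular \<kappa> \<T> \<and>
     L2_on \<Omega> f \<and>
     continuous_on (closure \<Omega>) chi \<and> H1_on \<Omega> chi \<and> (\<forall>x\<in>frontier \<Omega>. chi x \<le> 0) \<and>
     u \<in> Kh \<Omega> \<T> chi \<and>
     (\<forall>v \<in> Kh \<Omega> \<T> chi. a_form \<Omega> u (\<lambda>x. v x - u x) \<ge> L2ip \<Omega> f (\<lambda>x. v x - u x)) \<and>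
     \<sigma> \<in> Vnc \<Omega> \<T> \<and>
     (\<forall>v \<in> Vnc \<Omega> \<T>. disc_ip \<T> \<sigma> v =
         L2ip \<Omega> f (Pih \<Omega> \<T> v) - a_form \<Omega> u (Pih \<Omega> \<T> v))"
  have tri: "triangulation \<Omega> \<T>" and fL2: "L2_on \<Omega> f" and uK: "u \<in> Kh \<Omega> \<T> chi"
    and sV: "\<sigma> \<in> Vnc \<Omega> \<T>" using H by auto
  have Om: "open \<Omega>" and intcl: "interior (closure \<Omega>) = \<Omega>" using assms by (auto simp: domain_def)
  define h where "h T = diameter T" for T :: "pt set"
  define a where "a T = L2norm T (\<lambda>x. \<sigma> T x - elem_mean T (\<sigma> T))" for T
  define b where "b T = (INF c::real. L2norm T (\<lambda>x. f x - c))" for T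
  define e where "e T = L2norm T (\<lambda>x. lap u x + f x - \<sigma> T x)" for T
  have L2n: "L2norm T F \<ge> 0" for T F by (simp add: L2norm_def)
  have per: "a T \<le> b T + e T \<and> 0 \<le> a T \<and> 0 \<le> b T \<and> 0 \<le> h T" if T: "T \<in> \<T>" for T
  proof -
    have "is_triangle T" using tri T by (auto simp: triangulation_def)
    then obtain p q r where Tdef: "T = convex hull {p, q, r}" by (auto simp: is_triangle_def)
    have Tc: "compact T" unfolding Tdef by (rule finite_imp_compact_convex_hull) simp
    have Tv: "convex T" unfolding Tdef by (rule convex_convex_hull)
    have "T \<subseteq> closure \<Omega>" using tri T by (auto simp: triangulation_def)
    then have intT: "interior T \<subseteq> \<Omega>" using interior_mono intcl by blast
    have sa: "affine_fun (\<sigma> T)" using sV T by (auto simp: Vnc_def)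
    have P2: "P2_on T u" using uK T by (auto simp: Kh_def Vh_def)
    have "a T \<le> b T + e T"
      unfolding a_def b_def e_def by (rule tri_bound[OF Tc Tv Om intT fL2 sa P2])
    moreover have "0 \<le> b T" unfolding b_def by (rule cINF_greatest) (auto simp: L2n)
    moreover have "0 \<le> h T" unfolding h_def by (rule diameter_ge_0[OF compact_imp_bounded[OF Tc]])
    ultimately show ?thesis by (simp add: a_def L2n)
  qed
  have "eta3 \<T> \<sigma> = L2_set (\<lambda>T. h T * a T) \<T>"
    by (simp add: eta3_def L2_set_def h_def a_def power_mult_distrib)
  also have "\<dots> \<le> L2_set (\<lambda>T. h T * b T + h T * e T) \<T>"
  proof (rule L2_set_mono)
    fix T assume "T \<in> \<T>"
    then have "a T \<le> b T + e T" "0 \<le> a T" "0 \<le> h T" using per by auto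
    then show "h T * a T \<le> h T * b T + h T * e T" "0 \<le> h T * a T"
      by (auto simp: distrib_left[symmetric] intro: mult_left_mono)
  qed
  also have "\<dots> \<le> L2_set (\<lambda>T. h T * b T) \<T> + L2_set (\<lambda>T. h T * e T) \<T>"
    by (rule L2_set_triangle_ineq)
  also have "\<dots> = eta4 \<T> f + eta1 \<T> f u \<sigma>"
    by (simp add: eta4_def eta1_def L2_set_def h_def b_def e_def power_mult_distrib)
  finally show "eta3 \<T> \<sigma> \<le> 1 * (eta1 \<T> f u \<sigma> + eta4 \<T> f)" by simp
qed


end
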